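(* Let $\phi$ be a singular-expansive flow of a compact metric space $X$. Then: (1) the set of periodic orbits of $\phi$ is countable; (2) if $Sing(\phi)=\emptyset$ or $Sing(\phi)$ consists of finitely many isolated points of $X$, then $\phi$ is expansive; (3) if $Sing(\phi)$ is dynamically isolated, then for every $t>0$ the set of periodic orbits of $\phi$ with period in $(0,t]$ is finite.
   Context: A flow is a continuous $\phi:\mathbb{R}\times X\to X$, $\phi_t(x)=\phi(t,x)$, $\phi_0=\mathrm{id}$, $\phi_{t+s}=\phi_t\circ\phi_s$; $\phi_I(x)=\{\phi_t(x):t\in I\}$. $Sing(\phi)=\{\sigma:\phi_t(\sigma)=\sigma\ \forall t\}$; $dist(z,A)=\inf_{a\in A}d(z,a)$, with $dist(z,\emptyset)=diam(X)$. A point $x\notin Sing(\phi)$ is periodic if $\phi_t(x)=x$ for some $t>0$; the least such $t$ is its period. A compact invariant set $K$ ($\phi_t(K)=K$ for all $t$) is dynamically isolated if there is a neighborhood $U$ of $K$ with $K=\bigcap_{t\in\mathbb{R}}\phi_t(U)$. $\phi$ is singular-expansive (on $X$) if for every $\epsilon>0$ there is $\delta>0$ such that whenever $x,y\in X$ and an increasing homeomorphism $s:\mathbb{R}\to\mathbb{R}$ satisfy $d(\phi_t(x),\phi_{s(t)}(y))\le\delta\,dist(\phi_t(x),Sing(\phi))$ for all $t$, then $\phi_{s(t_0)}(y)\in\phi_{[t_0-\epsilon,t_0+\epsilon]}(x)$ for some $t_0$. $\phi$ is expansive on $\Lambda\subset X$ (Bowen–Walters) if for every $\epsilon>0$ there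 is $\delta>0$ such that whenever $x,y\in\Lambda$ and a continuous $s:\mathbb{R}\to\mathbb{R}$ with $s(0)=0$ satisfy $d(\phi_t(x),\phi_{s(t)}(y))\le\delta$ for all $t$, then $y\in\phi_{[-\epsilon,\epsilon]}(x)$; expansive means expansive on $X$. *)

theory Defs
  imports "HOL-Analysis.Analysis"
begin

text \<open>Flows on a metric space X (taken to be the whole type 'a).\<close>

definition is_flow :: "(real \<Rightarrow> 'a::metric_space \<Rightarrow> 'a) \<Rightarrow> bool" where
  "is_flow \<phi> \<longleftrightarrow> continuous_on UNIV (\<lambda>(t, x). \<phi> t x)
     \<and> \<phi> 0 = id \<and> (\<forall>t s. \<phi> (t + s) = \<phi> t \<circ> \<phi> s)"

definition flow_seg :: "(real \<Rightarrow> 'a \<Rightarrow> 'a) \<Rightarrow> real set \<Rightarrow> 'a \<Rightarrow> 'a set" where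
  "flow_seg \<phi> I x = (\<lambda>t. \<phi> t x) ` I"

definition orbit :: "(real \<Rightarrow> 'a \<Rightarrow> 'a) \<Rightarrow> 'a \<Rightarrow> 'a set" where
  "orbit \<phi> x = flow_seg \<phi> UNIV x"

definition Sing :: "(real \<Rightarrow> 'a \<Rightarrow> 'a) \<Rightarrow> 'a set" where
  "Sing \<phi> = {\<sigma>. \<forall>t. \<phi> t \<sigma> = \<sigma>}"

definition sdist :: "'a::metric_space \<Rightarrow> 'a set \<Rightarrow> real" where
  "sdist z A = (if A = {} then diameter (UNIV :: 'a set) else infdist z A)"

definition periodic_pt :: "(real \<Rightarrow> 'a \<Rightarrow> 'a) \<Rightarrow> 'a \<Rightarrow> bool" where
  "periodic_pt \<phi> x \<longleftrightarrow> x \<notin> Sing \<phi> \<and> (\<exists>t>0. \<phi> t x = x)"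

definition period :: "(real \<Rightarrow> 'a \<Rightarrow> 'a) \<Rightarrow> 'a \<Rightarrow> real" where
  "period \<phi> x = Inf {t. t > 0 \<and> \<phi> t x = x}"

definition periodic_orbits :: "(real \<Rightarrow> 'a \<Rightarrow> 'a) \<Rightarrow> 'a set set" where
  "periodic_orbits \<phi> = {orbit \<phi> x | x. periodic_pt \<phi> x}"

definition dyn_isolated :: "(real \<Rightarrow> 'a::metric_space \<Rightarrow> 'a) \<Rightarrow> 'a set \<Rightarrow> bool" where
  "dyn_isolated \<phi> K \<longleftrightarrow> compact K \<and> (\<forall>t. \<phi> t ` K = K) \<and>
     (\<exists>U. (\<exists>V. open V \<and> K \<subseteq> V \<and> V \<subseteq> U) \<and> K = (\<Inter>t. \<phi> t ` U))"

definition increasing_homeo :: "(real \<Rightarrow> real) \<Rightarrow> bool" where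
  "increasing_homeo s \<longleftrightarrow> mono s \<and> (\<exists>g. homeomorphism UNIV UNIV s g)"

definition singular_expansive :: "(real \<Rightarrow> 'a::metric_space \<Rightarrow> 'a) \<Rightarrow> bool" where
  "singular_expansive \<phi> \<longleftrightarrow> (\<forall>\<epsilon>>0. \<exists>\<delta>>0. \<forall>x y s. increasing_homeo s \<and>
     (\<forall>t. dist (\<phi> t x) (\<phi> (s t) y) \<le> \<delta> * sdist (\<phi> t x) (Sing \<phi>)) \<longrightarrow>
     (\<exists>t0. \<phi> (s t0) y \<in> flow_seg \<phi> {t0 - \<epsilon> .. t0 + \<epsilon>} x))"

definition expansive_on :: "(real \<Rightarrow> 'a::metric_space \<Rightarrow> 'a) \<Rightarrow> 'a set \<Rightarrow> bool" where
  "expansive_on \<phi> \<Lambda> \<longleftrightarrow> (\<forall>\<epsilon>>0. \<exists>\<delta>>0. \<forall>x\<in>\<Lambda>. \<forall>y\<in>\<Lambda>. \<forall>s. continuous_on UNIV s \<and> s 0 = 0 \<and>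
     (\<forall>t. dist (\<phi> t x) (\<phi> (s t) y) \<le> \<delta>) \<longrightarrow> y \<in> flow_seg \<phi> {-\<epsilon> .. \<epsilon>} x)"

definition expansive :: "(real \<Rightarrow> 'a::metric_space \<Rightarrow> 'a) \<Rightarrow> bool" where
  "expansive \<phi> \<longleftrightarrow> expansive_on \<phi> UNIV"

end

theory Submission
  imports Defs
begin


definition pl :: "(real \<Rightarrow> real) \<Rightarrow> real \<Rightarrow> real" where
  "pl s t = s (of_int \<lfloor>t\<rfloor>) + (t - of_int \<lfloor>t\<rfloor>) * (s (of_int \<lfloor>t\<rfloor> + 1) - s (of_int \<lfloor>t\<rfloor>))"

lemma pl_piece:
  assumes "of_int k \<le> t" "t \<le> of_int k + 1"
  shows "pl s t = s (of_int k) + (t - of_int k) * (s (of_int k + 1) - s (of_int k))"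
proof (cases "t = of_int k + 1")
  case True
  have "\<lfloor>t\<rfloor> = k + 1" using True by simp
  then show ?thesis unfolding pl_def using True by simp
next
  case False
  then have "\<lfloor>t\<rfloor> = k" using assms by (intro floor_unique) auto
  then show ?thesis unfolding pl_def by simp
qed

lemma pl_cont: "continuous_on UNIV (pl s)"
proof (rule continuous_at_imp_continuous_on, intro ballI)
  fix t :: real
  define k where "k = \<lfloor>t\<rfloor>"
  have c: "continuous_on {of_int j .. of_int j + 1} (pl s)" for j
    by (rule continuous_on_eq[of _ "\<lambda>t. s (of_int j) + (t - of_int j) * (s (of_int j + 1) - s (of_int j))"])
       (auto intro!: continuous_intros simp: pl_piece)
  have "continuous_on ({of_int (k-1) .. of_int (k-1) + 1} \<union> {of_int k .. of_int k + 1}) (pl s)"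
    by (intro continuous_on_closed_Un c) auto
  moreover have "{of_int (k-1) .. of_int (k-1) + 1} \<union> {of_int k .. of_int k + 1} = {of_int k - 1 .. of_int k + (1::real)}"
    by auto
  ultimately have "continuous_on {of_int k - 1 .. of_int k + (1::real)} (pl s)" by simp
  moreover have "t \<in> interior {of_int k - 1 .. of_int k + (1::real)}" unfolding k_def by simp linarith
  ultimately show "isCont (pl s) t" by (rule continuous_on_interior)
qed

locale plset =
  fixes s :: "real \<Rightarrow> real" and \<tau> :: real
  assumes near: "\<And>t h. \<bar>h\<bar> \<le> 1 \<Longrightarrow> \<bar>s (t + h) - s t - h\<bar> < \<tau>" and tau: "\<tau> \<le> 1/4"
begin

lemma slope: "s (t + 1) - s t \<ge> 1/2"
  using near[of 1 t] tau by auto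

lemma low_same:
  assumes "of_int k \<le> a" "a \<le> b" "b \<le> of_int k + 1"
  shows "pl s b - pl s a \<ge> (b - a)/2"
proof -
  have pa: "pl s a = s (of_int k) + (a - of_int k) * (s (of_int k + 1) - s (of_int k))"
    using assms by (intro pl_piece) auto
  have pb: "pl s b = s (of_int k) + (b - of_int k) * (s (of_int k + 1) - s (of_int k))"
    using assms by (intro pl_piece) auto
  have "pl s b - pl s a = (b - a) * (s (of_int k + 1) - s (of_int k))"
    unfolding pa pb by (simp add: algebra_simps)
  also have "\<dots> \<ge> (b - a) * (1/2)" using assms slope[of "of_int k"] by (intro mult_left_mono) auto
  finally show ?thesis by simp
qed

lemma low_n: "\<forall>a b. a \<le> b \<and> \<lfloor>b\<rfloor> - \<lfloor>a\<rfloor> = int n \<longrightarrow> pl s b - pl s a \<ge> (b - a)/2"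
proof (induction n)
  case 0
  show ?case
  proof (intro allI impI)
    fix a b :: real assume A: "a \<le> b \<and> \<lfloor>b\<rfloor> - \<lfloor>a\<rfloor> = int 0"
    show "pl s b - pl s a \<ge> (b - a)/2"
    proof (rule low_same[of "\<lfloor>a\<rfloor>"])
      show "of_int \<lfloor>a\<rfloor> \<le> a" by linarith
      show "a \<le> b" using A by simp
      have "\<lfloor>b\<rfloor> = \<lfloor>a\<rfloor>" using A by simp
      then show "b \<le> of_int \<lfloor>a\<rfloor> + 1" by linarith
    qed
  qed
next
  case (Suc n)
  show ?case
  proof (intro allI impI)
    fix a b :: real assume A: "a \<le> b \<and> \<lfloor>b\<rfloor> - \<lfloor>a\<rfloor> = int (Suc n)"
    define m :: real where "m = of_int (\<lfloor>a\<rfloor> + 1)"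
    have fm: "\<lfloor>m\<rfloor> = \<lfloor>a\<rfloor> + 1" unfolding m_def by simp
    have am: "a \<le> m" unfolding m_def by linarith
    have "\<lfloor>a\<rfloor> + 1 \<le> \<lfloor>b\<rfloor>" using A by simp
    then have mb: "m \<le> b" unfolding m_def by linarith
    have 1: "pl s b - pl s m \<ge> (b - m)/2" using Suc.IH mb fm A by auto
    have 2: "pl s m - pl s a \<ge> (m - a)/2"
      by (rule low_same[of "\<lfloor>a\<rfloor>"]) (use am in \<open>auto simp: m_def\<close>)
    show "pl s b - pl s a \<ge> (b - a)/2" using 1 2 by (simp add: field_simps)
  qed
qed

lemma low: assumes "a \<le> b" shows "pl s b - pl s a \<ge> (b - a)/2"
proof -
  have "\<lfloor>a\<rfloor> \<le> \<lfloor>b\<rfloor>" using assms by (rule floor_mono)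
  then obtain n where "\<lfloor>b\<rfloor> - \<lfloor>a\<rfloor> = int n" by (metis diff_ge_0_iff_ge nonneg_int_cases)
  then show ?thesis using low_n[of n] assms by blast
qed

lemma low_abs: "\<bar>b - a\<bar> \<le> 2 * \<bar>pl s b - pl s a\<bar>"
proof (cases "a \<le> b")
  case True then have "(b - a)/2 \<le> pl s b - pl s a" by (rule low)
  moreover have "pl s b - pl s a \<le> \<bar>pl s b - pl s a\<bar>" by simp
  ultimately have "b - a \<le> 2 * \<bar>pl s b - pl s a\<bar>" by (simp add: field_simps)
  moreover have "\<bar>b - a\<bar> = b - a" using True by simp
  ultimately show ?thesis by simp
next
  case False then have "b \<le> a" by simp
  then have "(a - b)/2 \<le> pl s a - pl s b" by (rule low)
  moreover have "pl s a - pl s b \<le> \<bar>pl s b - pl s a\<bar>" by simp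
  ultimately have "a - b \<le> 2 * \<bar>pl s b - pl s a\<bar>" by (simp add: field_simps)
  moreover have "\<bar>b - a\<bar> = a - b" using False by simp
  ultimately show ?thesis by simp
qed

lemma pl_inj: "inj (pl s)"
proof (rule injI)
  fix x y assume "pl s x = pl s y"
  then have "\<bar>y - x\<bar> \<le> 0" using low_abs[of y x] by simp
  then show "x = y" by simp
qed

lemma pl_surj: "surj (pl s)"
proof -
  have "v \<in> range (pl s)" for v
  proof -
    define D where "D = 2 * \<bar>v - pl s 0\<bar>"
    have D: "D/2 \<ge> v - pl s 0" "D/2 \<ge> pl s 0 - v" "D \<ge> 0" unfolding D_def by auto
    have "pl s 0 - pl s (-D) \<ge> D/2" using low[of "-D" 0] D by simp
    then have 1: "pl s (-D) \<le> v" using D by linarith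
    have "pl s D - pl s 0 \<ge> D/2" using low[of 0 D] D by simp
    then have 2: "v \<le> pl s D" using D by linarith
    obtain x where "pl s x = v" using IVT'[of "pl s", OF 1 2] continuous_on_subset[OF pl_cont] D by fastforce
    then show ?thesis by blast
  qed
  then show ?thesis by blast
qed

lemma pl_homeo: "increasing_homeo (pl s)"
  unfolding increasing_homeo_def
proof
  show "mono (pl s)" by (rule monoI) (use low in force)
  define g where "g = inv (pl s)"
  have gf: "g (pl s x) = x" for x unfolding g_def using pl_inj by simp
  have fg: "pl s (g y) = y" for y unfolding g_def using pl_surj by (simp add: surj_f_inv_f)
  have gc: "continuous_on UNIV g"
    unfolding continuous_on_iff
  proof (intro ballI allI impI)
    fix x e :: real assume "e > 0"
    show "\<exists>d>0. \<forall>x'\<in>UNIV. dist x' x < d \<longrightarrow> dist (g x') (g x) < e"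
    proof (intro exI[of _ "e/2"] conjI ballI impI)
      fix x' assume "dist x' x < e/2"
      moreover have "\<bar>g x' - g x\<bar> \<le> 2 * \<bar>x' - x\<bar>" using low_abs[of "g x'" "g x"] fg by simp
      ultimately show "dist (g x') (g x) < e" by (simp add: dist_real_def)
    qed (use \<open>e > 0\<close> in simp)
  qed
  show "\<exists>g. homeomorphism UNIV UNIV (pl s) g"
    unfolding homeomorphism_def
    by (intro exI[of _ g] conjI pl_cont gc pl_surj) (auto simp: gf fg intro: range_eqI[of _ _ "pl s _"] surjI[of g "pl s"])
qed

lemma pl_close: "\<bar>pl s t - s t\<bar> < 2 * \<tau>"
proof -
  define k :: real where "k = of_int \<lfloor>t\<rfloor>"
  define h where "h = t - k"
  have h: "0 \<le> h" "h < 1" unfolding h_def k_def by linarith+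
  have p: "pl s t = s k + h * (s (k+1) - s k)" unfolding pl_def h_def k_def by simp
  have a: "\<bar>s (k + h) - s k - h\<bar> < \<tau>" using near h by simp
  have b: "\<bar>s (k + 1) - s k - 1\<bar> < \<tau>" using near by simp
  have "pl s t - s t = h * (s (k+1) - s k - 1) - (s (k + h) - s k - h)"
    unfolding p h_def by (simp add: algebra_simps)
  moreover have "\<bar>h * (s (k+1) - s k - 1)\<bar> \<le> \<tau>"
  proof -
    have "\<bar>h * (s (k+1) - s k - 1)\<bar> = h * \<bar>s (k+1) - s k - 1\<bar>" using h by (simp add: abs_mult)
    also have "\<dots> \<le> 1 * \<tau>" using h b by (intro mult_mono) auto
    finally show ?thesis by simp
  qed
  ultimately show ?thesis using a by linarith
qed

end

locale cflow =
  fixes \<phi> :: "real \<Rightarrow> 'a::metric_space \<Rightarrow> 'a"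
  assumes cpt: "compact (UNIV::'a set)" and fl: "is_flow \<phi>"
begin

lemma phi0[simp]: "\<phi> 0 x = x"
  using fl unfolding is_flow_def by simp

lemma phiadd[simp]: "\<phi> t (\<phi> s x) = \<phi> (t+s) x"
  using fl unfolding is_flow_def by (metis comp_apply)

lemma phi_inv[simp]: "\<phi> (-t) (\<phi> t x) = x" "\<phi> t (\<phi> (-t) x) = x"
  by simp_all

lemma cont: "continuous_on UNIV (\<lambda>c. \<phi> (fst c) (snd c))"
  using fl unfolding is_flow_def by (simp add: case_prod_beta)

lemma cont_at: "continuous (at c) (\<lambda>c. \<phi> (fst c) (snd c))"
  using cont by (metis continuous_on_eq_continuous_at open_UNIV UNIV_I)

lemma cont_comp: 
  assumes "continuous_on S f" "continuous_on S g"
  shows "continuous_on S (\<lambda>z. \<phi> (f z) (g z))"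
proof -
  have "continuous_on S ((\<lambda>c. \<phi> (fst c) (snd c)) \<circ> (\<lambda>z. (f z, g z)))"
    by (rule continuous_on_compose) (auto intro!: continuous_intros assms continuous_on_subset[OF cont])
  then show ?thesis by (simp add: o_def)
qed

lemma UC:
  assumes "e > 0"
  shows "\<exists>d>0. \<forall>a b x y. \<bar>a\<bar> \<le> T \<and> \<bar>b\<bar> \<le> T \<and> \<bar>a-b\<bar> < d \<and> dist x y < d \<longrightarrow> dist (\<phi> a x) (\<phi> b y) < e"
proof -
  have "compact ({-T..T} \<times> (UNIV::'a set))" using cpt by (intro compact_Times) auto
  then have "uniformly_continuous_on ({-T..T} \<times> (UNIV::'a set)) (\<lambda>c. \<phi> (fst c) (snd c))"
    by (intro compact_uniformly_continuous continuous_on_subset[OF cont]) auto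
  then obtain d where d: "d > 0" and H: "\<And>u v. u \<in> {-T..T} \<times> UNIV \<Longrightarrow> v \<in> {-T..T} \<times> UNIV \<Longrightarrow>
      dist v u < d \<Longrightarrow> dist (\<phi> (fst v) (snd v)) (\<phi> (fst u) (snd u)) < e"
    unfolding uniformly_continuous_on_def using assms by metis
  show ?thesis
  proof (intro exI[of _ "d/2"] conjI allI impI)
    fix a b :: real and x y :: 'a assume A: "\<bar>a\<bar> \<le> T \<and> \<bar>b\<bar> \<le> T \<and> \<bar>a-b\<bar> < d/2 \<and> dist x y < d/2"
    have "dist (a,x) (b,y) \<le> dist (a,x) (b,x) + dist (b,x) (b,y)" by (rule dist_triangle)
    also have "\<dots> = \<bar>a-b\<bar> + dist x y" by (simp add: dist_Pair_Pair dist_real_def)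
    finally have "dist (a,x) (b,y) < d" using A by linarith
    then have "dist (\<phi> a x) (\<phi> b y) < e" using H[of "(b,y)" "(a,x)"] A by (auto simp: dist_commute abs_le_iff)
    then show "dist (\<phi> a x) (\<phi> b y) < e" .
  qed (use d in auto)
qed


lemma Sing_closed: "closed (Sing \<phi>)"
proof -
  have "Sing \<phi> = (\<Inter>t. {z. \<phi> t z = z})" unfolding Sing_def by auto
  moreover have "closed {z. \<phi> t z = z}" for t
    by (rule closed_Collect_eq) (auto intro!: cont_comp continuous_intros)
  ultimately show ?thesis by auto
qed

lemma Sing_inv[simp]: "\<phi> t z \<in> Sing \<phi> \<longleftrightarrow> z \<in> Sing \<phi>"
proof
  assume A: "\<phi> t z \<in> Sing \<phi>"
  have "\<phi> s z = z" for s
  proof -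
    have "\<phi> s (\<phi> t z) = \<phi> t z" using A unfolding Sing_def by blast
    then have "\<phi> (-t) (\<phi> s (\<phi> t z)) = \<phi> (-t) (\<phi> t z)" by simp
    moreover have "-t + (s + t) = s" by simp
    ultimately show ?thesis by (metis phiadd phi_inv(1))
  qed
  then show "z \<in> Sing \<phi>" unfolding Sing_def by blast
next
  assume "z \<in> Sing \<phi>"
  then have "\<forall>s. \<phi> s z = z" unfolding Sing_def by blast
  then show "\<phi> t z \<in> Sing \<phi>" unfolding Sing_def by simp
qed

lemma nonsing: assumes "z \<notin> Sing \<phi>" shows "\<exists>T>0. \<phi> T z \<noteq> z"
proof -
  obtain T where T: "\<phi> T z \<noteq> z" using assms unfolding Sing_def by auto
  show ?thesis
  proof (cases "T > 0")
    case False
    then have "T < 0" using T by (cases "T = 0") auto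
    moreover have "\<phi> (-T) z \<noteq> z" using T by (metis phi_inv(2))
    ultimately show ?thesis by (intro exI[of _ "-T"]) auto
  qed (use T in auto)
qed

lemma orbit_alt: "orbit \<phi> x = range (\<lambda>t. \<phi> t x)"
  unfolding orbit_def flow_seg_def by simp

lemma orbit_shift[simp]: "orbit \<phi> (\<phi> a x) = orbit \<phi> x"
  unfolding orbit_alt
proof (intro set_eqI iffI)
  fix z assume "z \<in> range (\<lambda>t. \<phi> t (\<phi> a x))" 
  then obtain t where "z = \<phi> t (\<phi> a x)" by blast
  then have "z = \<phi> (t+a) x" by (simp only: phiadd)
  then show "z \<in> range (\<lambda>t. \<phi> t x)" by blast
next
  fix z assume "z \<in> range (\<lambda>t. \<phi> t x)"
  then obtain t where "z = \<phi> t x" by blast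
  moreover have "\<phi> (t - a) (\<phi> a x) = \<phi> t x" by (simp only: phiadd diff_add_cancel)
  ultimately show "z \<in> range (\<lambda>t. \<phi> t (\<phi> a x))" by (metis rangeI)
qed

lemma per_nat: assumes "\<phi> p x = x" shows "\<phi> (real n * p) x = x"
proof (induction n)
  case (Suc n)
  have e: "real (Suc n) * p = p + real n * p" by (simp add: algebra_simps)
  have "\<phi> (real (Suc n) * p) x = \<phi> p (\<phi> (real n * p) x)" by (simp only: e phiadd)
  then show ?case using Suc assms by simp
qed simp

lemma per_int: assumes "\<phi> p x = x" shows "\<phi> (of_int k * p) x = x"
proof (cases "k \<ge> 0")
  case True
  then obtain m where "k = int m" using nonneg_int_cases by blast
  then show ?thesis using per_nat[OF assms, of m] by simp
next
  case False
  then obtain m where m: "k = - int m" by (metis nonpos_int_cases linorder_not_le less_imp_le)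
  have "\<phi> (of_int k * p) x = \<phi> (-(real m * p)) x" by (simp add: m)
  also have "\<dots> = \<phi> (-(real m * p)) (\<phi> (real m * p) x)" by (simp only: per_nat[OF assms])
  also have "\<dots> = x" by (simp only: phi_inv)
  finally show ?thesis .
qed

lemma sdist_pos:
  assumes K: "compact K" "K \<inter> Sing \<phi> = {}"
  shows "\<exists>r>0. \<forall>z\<in>K. r \<le> sdist z (Sing \<phi>)"
proof (cases "K = {}")
  case True then show ?thesis by (intro exI[of _ 1]) auto
next
  case Kne: False
  show ?thesis
  proof (cases "Sing \<phi> = {}")
    case True
    obtain z where z: "z \<in> K" using Kne by auto
    then have "z \<notin> Sing \<phi>" using K by auto
    then obtain T where "\<phi> T z \<noteq> z" using nonsing by auto
    then have "0 < dist z (\<phi> T z)" by simp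
    also have "\<dots> \<le> diameter (UNIV::'a set)"
      by (rule diameter_bounded_bound) (auto intro: compact_imp_bounded cpt)
    finally show ?thesis using True unfolding sdist_def by auto
  next
    case False
    obtain z where z: "z \<in> K" and m: "\<forall>y\<in>K. infdist z (Sing \<phi>) \<le> infdist y (Sing \<phi>)"
      using continuous_attains_inf[OF K(1) Kne, of "\<lambda>y. infdist y (Sing \<phi>)"]
        continuous_on_infdist[OF continuous_on_id, of K "Sing \<phi>"] by auto
    have "infdist z (Sing \<phi>) > 0"
      using z K by (intro infdist_pos_not_in_closed Sing_closed False) auto
    then show ?thesis using m False unfolding sdist_def by (intro exI[of _ "infdist z (Sing \<phi>)"]) auto
  qed
qed

lemma nocross:
  fixes g :: "real \<Rightarrow> real"
  assumes "continuous_on S g" "connected S" "a \<in> S" "\<bar>g a\<bar> < c" "\<forall>t\<in>S. \<bar>g t\<bar> \<noteq> c" "b \<in> S"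
  shows "\<bar>g b\<bar> < c"
proof (rule ccontr)
  assume "\<not> \<bar>g b\<bar> < c"
  have C: "connected (g ` S)" using assms by (intro connected_continuous_image)
  have "g a \<in> g ` S" "g b \<in> g ` S" using assms by auto
  show False
  proof (cases "g b \<ge> c")
    case True
    then have "c \<in> g ` S" using connectedD_interval[OF C \<open>g a \<in> g ` S\<close> \<open>g b \<in> g ` S\<close>, of c] assms by auto
    then show False using assms by force
  next
    case False
    then have "g b \<le> -c" using \<open>\<not> \<bar>g b\<bar> < c\<close> by auto
    then have "-c \<in> g ` S" using connectedD_interval[OF C \<open>g b \<in> g ` S\<close> \<open>g a \<in> g ` S\<close>, of "-c"] assms by auto
    then show False using assms by force
  qed
qed

lemma SP:
  assumes "w \<notin> Sing \<phi>"
  shows "\<exists>\<rho>>0. \<exists>\<epsilon>>0. \<forall>z u. dist z w < \<rho> \<and> 0 < u \<and> u < \<epsilon> \<longrightarrow> \<phi> u z \<noteq> z"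
proof -
  obtain T where T: "T > 0" "\<phi> T w \<noteq> w" using nonsing[OF assms] by auto
  define d0 where "d0 = dist w (\<phi> T w)"
  have d0: "d0 > 0" using T unfolding d0_def by (simp add: eq_commute)
  obtain k where k: "k > 0" and K: "\<And>a b x y. \<bar>a\<bar> \<le> T+1 \<Longrightarrow> \<bar>b\<bar> \<le> T+1 \<Longrightarrow> \<bar>a-b\<bar> < k \<Longrightarrow> dist x y < k \<Longrightarrow> dist (\<phi> a x) (\<phi> b y) < d0/3"
    using UC[of "d0/3" "T+1"] d0 by auto
  have "\<forall>z u. dist z w < min k (d0/3) \<and> 0 < u \<and> u < min k 1 \<longrightarrow> \<phi> u z \<noteq> z"
  proof (intro allI impI notI)
    fix z u assume A: "dist z w < min k (d0/3) \<and> 0 < u \<and> u < min k 1" and P: "\<phi> u z = z"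
    define n where "n = nat \<lfloor>T/u\<rfloor>"
    have fl: "of_int \<lfloor>T/u\<rfloor> \<le> T/u" "T/u < of_int \<lfloor>T/u\<rfloor> + 1" by linarith+
    have "\<lfloor>T/u\<rfloor> \<ge> 0" using T A by simp
    then have rn: "real n = of_int \<lfloor>T/u\<rfloor>" unfolding n_def by simp
    have u: "u > 0" using A by auto
    have "of_int \<lfloor>T/u\<rfloor> * u \<le> T/u * u" by (rule mult_right_mono[OF fl(1)]) (use u in simp)
    then have "real n * u \<le> T" using u unfolding rn by simp
    moreover have "T/u * u < (of_int \<lfloor>T/u\<rfloor> + 1) * u" by (rule mult_strict_right_mono[OF fl(2) u])
    then have "T < real n * u + u" using u unfolding rn by (simp add: algebra_simps)
    ultimately have c: "0 \<le> T - real n * u" "T - real n * u < u" by auto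
    have "\<phi> T z = \<phi> (T - real n * u) (\<phi> (real n * u) z)" by (simp only: phiadd diff_add_cancel)
    also have "\<dots> = \<phi> (T - real n * u) z" by (simp only: per_nat[OF P])
    finally have eT: "\<phi> T z = \<phi> (T - real n * u) z" .
    have 1: "dist (\<phi> T z) (\<phi> T w) < d0/3" using K[of T T z w] A T by auto
    have 2: "dist (\<phi> (T - real n * u) z) (\<phi> 0 z) < d0/3" using K[of "T - real n * u" 0 z z] A c T by auto
    have t1: "dist w (\<phi> T w) \<le> dist w z + dist z (\<phi> T w)" by (rule dist_triangle)
    have t2: "dist z (\<phi> T w) \<le> dist z (\<phi> T z) + dist (\<phi> T z) (\<phi> T w)" by (rule dist_triangle)
    have "d0 \<le> dist w z + dist z (\<phi> T z) + dist (\<phi> T z) (\<phi> T w)"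
      unfolding d0_def using t1 t2 by linarith
    also have "\<dots> < d0" using 1 2 A eT by (simp add: dist_commute)
    finally show False by simp
  qed
  then show ?thesis using k d0 
    apply - apply (rule exI[of _ "min k (d0/3)"]) apply (rule conjI) apply simp 
    apply (rule exI[of _ "min k 1"]) by auto
qed

lemma minper:
  assumes K: "compact K" "K \<inter> Sing \<phi> = {}"
  shows "\<exists>p0>0. \<forall>w\<in>K. \<forall>u. 0 < u \<and> u < p0 \<longrightarrow> \<phi> u w \<noteq> w"
proof -
  have "\<forall>w\<in>K. \<exists>\<rho>. \<rho> > 0 \<and> (\<exists>\<epsilon>>0. \<forall>z u. dist z w < \<rho> \<and> 0 < u \<and> u < \<epsilon> \<longrightarrow> \<phi> u z \<noteq> z)"
    using SP K by blast
  from bchoice[OF this] obtain R where R: "\<forall>w\<in>K. R w > 0 \<and> (\<exists>\<epsilon>>0. \<forall>z u. dist z w < R w \<and> 0 < u \<and> u < \<epsilon> \<longrightarrow> \<phi> u z \<noteq> z)"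
    by blast
  then have "\<forall>w\<in>K. \<exists>\<epsilon>. R w > 0 \<and> \<epsilon> > 0 \<and> (\<forall>z u. dist z w < R w \<and> 0 < u \<and> u < \<epsilon> \<longrightarrow> \<phi> u z \<noteq> z)"
    by blast
  from bchoice[OF this] obtain E where E: "\<forall>w\<in>K. R w > 0 \<and> E w > 0 \<and> (\<forall>z u. dist z w < R w \<and> 0 < u \<and> u < E w \<longrightarrow> \<phi> u z \<noteq> z)"
    by blast
  have "K \<subseteq> (\<Union>w\<in>K. ball w (R w))" using E by force
  then obtain C where C: "C \<subseteq> K" "finite C" "K \<subseteq> (\<Union>w\<in>C. ball w (R w))"
    using compactE_image[OF K(1), of K "\<lambda>w. ball w (R w)"] by auto
  show ?thesis
  proof (cases "C = {}")
    case True
    then show ?thesis using C by (intro exI[of _ 1]) auto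
  next
    case False
    define p0 where "p0 = Min (E ` C)"
    have p0: "p0 > 0" unfolding p0_def using C False E by (subst Min_gr_iff) auto
    show ?thesis
    proof (intro exI[of _ p0] conjI ballI allI impI p0)
      fix w u assume w: "w \<in> K" and u: "0 < u \<and> u < p0"
      obtain c where c: "c \<in> C" "dist c w < R c" using C w by auto
      have "p0 \<le> E c" unfolding p0_def using C c by auto
      moreover have "c \<in> K" using c C by auto
      ultimately have H: "\<forall>z u. dist z c < R c \<and> 0 < u \<and> u < E c \<longrightarrow> \<phi> u z \<noteq> z" using E by blast
      have "dist w c < R c" using c(2) by (simp add: dist_commute)
      moreover have "u < E c" using u \<open>p0 \<le> E c\<close> by linarith
      ultimately show "\<phi> u w \<noteq> w" using H u by blast
    qed
  qed
qed

lemma floor_red: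
  fixes p t :: real assumes p: "p > 0"
  shows "0 \<le> t - of_int \<lfloor>t/p\<rfloor> * p" "t - of_int \<lfloor>t/p\<rfloor> * p < p"
proof -
  have fl: "of_int \<lfloor>t/p\<rfloor> \<le> t/p" "t/p < of_int \<lfloor>t/p\<rfloor> + 1" by linarith+
  have "of_int \<lfloor>t/p\<rfloor> * p \<le> t/p * p" by (rule mult_right_mono[OF fl(1)]) (use p in simp)
  then show "0 \<le> t - of_int \<lfloor>t/p\<rfloor> * p" using p by simp
  have "t/p * p < (of_int \<lfloor>t/p\<rfloor> + 1) * p" by (rule mult_strict_right_mono[OF fl(2) p])
  then show "t - of_int \<lfloor>t/p\<rfloor> * p < p" using p by (simp add: algebra_simps)
qed

lemma per_red:
  assumes "\<phi> p x = x"
  shows "\<phi> t x = \<phi> (t - of_int k * p) x"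
proof -
  have "\<phi> t x = \<phi> (t - of_int k * p) (\<phi> (of_int k * p) x)" by (simp only: phiadd diff_add_cancel)
  also have "\<dots> = \<phi> (t - of_int k * p) x" by (simp only: per_int[OF assms])
  finally show ?thesis .
qed

lemma cont_time: "continuous_on S (\<lambda>t. \<phi> t x)"
  by (rule cont_comp) (auto intro: continuous_intros)

lemma Lloc:
  assumes SE: "singular_expansive \<phi>" and x: "x \<notin> Sing \<phi>" "p > 0" "\<phi> p x = x"
  shows "\<exists>\<eta>>0. \<forall>y q. dist y x < \<eta> \<and> \<bar>q - p\<bar> < \<eta> \<and> q > 0 \<and> \<phi> q y = y \<longrightarrow> orbit \<phi> y = orbit \<phi> x"
proof -
  define Ko where "Ko = (\<lambda>t. \<phi> t x) ` {0..p}"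
  have "compact Ko" unfolding Ko_def by (intro compact_continuous_image cont_time) auto
  moreover have "Ko \<inter> Sing \<phi> = {}" unfolding Ko_def using x by auto
  ultimately obtain r where r: "r > 0" "\<forall>z\<in>Ko. r \<le> sdist z (Sing \<phi>)" using sdist_pos by blast
  have rall: "r \<le> sdist (\<phi> t x) (Sing \<phi>)" for t
  proof -
    have "\<phi> t x = \<phi> (t - of_int \<lfloor>t/p\<rfloor> * p) x" by (rule per_red[OF x(3)])
    moreover have "\<phi> (t - of_int \<lfloor>t/p\<rfloor> * p) x \<in> Ko" unfolding Ko_def
      using floor_red[OF x(2), of t] by auto
    ultimately show ?thesis using r by auto
  qed
  obtain ds where ds: "ds > 0" and DS: "\<And>x y s. increasing_homeo s \<and>
     (\<forall>t. dist (\<phi> t x) (\<phi> (s t) y) \<le> ds * sdist (\<phi> t x) (Sing \<phi>)) \<Longrightarrow>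
     (\<exists>t0. \<phi> (s t0) y \<in> flow_seg \<phi> {t0 - 1 .. t0 + 1} x)"
    using SE unfolding singular_expansive_def by (meson zero_less_one)
  define E where "E = ds * r"
  have E: "E > 0" unfolding E_def using ds r by simp
  obtain k where k: "k > 0" and K: "\<And>a b x y. \<bar>a\<bar> \<le> 2*p \<Longrightarrow> \<bar>b\<bar> \<le> 2*p \<Longrightarrow> \<bar>a-b\<bar> < k \<Longrightarrow> dist x y < k \<Longrightarrow> dist (\<phi> a x) (\<phi> b y) < E"
    using UC[OF E, of "2*p"] by auto
  have "\<forall>y q. dist y x < min k (p/2) \<and> \<bar>q - p\<bar> < min k (p/2) \<and> q > 0 \<and> \<phi> q y = y \<longrightarrow> orbit \<phi> y = orbit \<phi> x"
  proof (intro allI impI)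
    fix y q assume A: "dist y x < min k (p/2) \<and> \<bar>q - p\<bar> < min k (p/2) \<and> q > 0 \<and> \<phi> q y = y"
    define s where "s = (\<lambda>t::real. q/p * t)"
    have qp: "q/p > 0" using A x by simp
    have ih: "increasing_homeo s" unfolding increasing_homeo_def
    proof
      show "mono s"
      proof (rule monoI)
        fix a b :: real assume "a \<le> b" then show "s a \<le> s b" unfolding s_def using qp by (intro mult_left_mono) auto
      qed
      show "\<exists>g. homeomorphism UNIV UNIV s g"
        unfolding homeomorphism_def s_def
      proof (intro exI[of _ "\<lambda>u. p/q * u"] conjI)
        show "range (\<lambda>t. q / p * t) = UNIV" by (rule surjI[of _ "\<lambda>u. p/q*u"]) (use A x in simp)
        show "range (\<lambda>t. p / q * t) = UNIV" by (rule surjI[of _ "\<lambda>u. q/p*u"]) (use A x in simp)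
      qed (use A x in \<open>auto intro!: continuous_intros\<close>)
    qed
    have cl: "dist (\<phi> t x) (\<phi> (s t) y) \<le> ds * sdist (\<phi> t x) (Sing \<phi>)" for t
    proof -
      define kk where "kk = \<lfloor>t/p\<rfloor>"
      define t' where "t' = t - of_int kk * p"
      have t': "0 \<le> t'" "t' < p" unfolding t'_def kk_def using floor_red[OF x(2)] by auto
      have e1: "\<phi> t x = \<phi> t' x" unfolding t'_def by (rule per_red[OF x(3)])
      have st: "s t = q/p * t' + of_int kk * q" unfolding s_def t'_def using x by (simp add: field_simps)
      have "\<phi> (s t) y = \<phi> (s t - of_int kk * q) y" by (rule per_red) (use A in simp)
      also have "s t - of_int kk * q = q/p * t'" using st by simp
      finally have e2: "\<phi> (s t) y = \<phi> (q/p * t') y" .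
      have d1: "\<bar>t' - q/p * t'\<bar> \<le> \<bar>p - q\<bar>"
      proof -
        have "t' - q/p * t' = (p - q) * (t'/p)" using x by (simp add: field_simps)
        then have "\<bar>t' - q/p * t'\<bar> = \<bar>p - q\<bar> * (t'/p)" using t' x by (simp add: abs_mult)
        also have "\<dots> \<le> \<bar>p - q\<bar> * 1" using t' x by (intro mult_left_mono) auto
        finally show ?thesis by simp
      qed
      have "q/p * t' \<le> 2 * p"
      proof -
        have "q/p * t' \<le> q/p * p" using t' qp by (intro mult_left_mono) auto
        also have "\<dots> = q" using x by simp
        finally show ?thesis using A by linarith
      qed
      moreover have "0 \<le> q/p * t'" using qp t' by (intro mult_nonneg_nonneg) auto
      ultimately have "dist (\<phi> t' x) (\<phi> (q/p * t') y) < E"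
        using K[of t' "q/p * t'" x y] t' A d1 by (auto simp: dist_commute abs_minus_commute)
      then have "dist (\<phi> t x) (\<phi> (s t) y) < E" using e1 e2 by simp
      also have "E \<le> ds * sdist (\<phi> t x) (Sing \<phi>)" unfolding E_def using rall ds by (simp add: mult_left_mono)
      finally show ?thesis by simp
    qed
    obtain t0 where "\<phi> (s t0) y \<in> flow_seg \<phi> {t0 - 1 .. t0 + 1} x" using DS[of s x y] ih cl by blast
    then obtain u where u: "\<phi> (s t0) y = \<phi> u x" unfolding flow_seg_def by auto
    have "y = \<phi> (-(s t0)) (\<phi> (s t0) y)" by (simp only: phi_inv)
    also have "\<dots> = \<phi> (u - s t0) x" unfolding u by simp
    finally show "orbit \<phi> y = orbit \<phi> x" by simp
  qed
  then show ?thesis using k x by (intro exI[of _ "min k (p/2)"]) auto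
qed

lemma LOC:
  assumes SE: "singular_expansive \<phi>" and x: "x \<notin> Sing \<phi>"
  shows "\<exists>N. open N \<and> (x,p) \<in> N \<and> (\<forall>y q y' q'. (y,q) \<in> N \<and> q > 0 \<and> \<phi> q y = y \<and>
            (y',q') \<in> N \<and> q' > 0 \<and> \<phi> q' y' = y' \<longrightarrow> orbit \<phi> y = orbit \<phi> y')"
proof (cases "p > 0")
  case True
  show ?thesis
  proof (cases "\<phi> p x = x")
    case True
    obtain \<eta> where eta: "\<eta> > 0" and H: "\<forall>y q. dist y x < \<eta> \<and> \<bar>q - p\<bar> < \<eta> \<and> q > 0 \<and> \<phi> q y = y \<longrightarrow> orbit \<phi> y = orbit \<phi> x"
      using Lloc[OF SE x \<open>p > 0\<close> True] by blast
    have B: "orbit \<phi> y = orbit \<phi> x" if "(y,q) \<in> ball (x,p) \<eta>" "q > 0" "\<phi> q y = y" for y q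
    proof -
      have "dist y x < \<eta>" using that dist_fst_le[of "(x,p)" "(y,q)"] by (simp add: dist_commute)
      moreover have "\<bar>q - p\<bar> < \<eta>" using that dist_snd_le[of "(x,p)" "(y,q)"] by (simp add: dist_real_def)
      ultimately show ?thesis using H that by blast
    qed
    show ?thesis using eta B by (intro exI[of _ "ball (x,p) \<eta>"]) auto
  next
    case False
    show ?thesis
    proof (intro exI[of _ "{c. \<phi> (snd c) (fst c) \<noteq> fst c}"] conjI)
      have "continuous_on UNIV (\<lambda>c::'a \<times> real. \<phi> (snd c) (fst c))"
        by (rule cont_comp) (auto intro: continuous_intros)
      then show "open {c::'a \<times> real. \<phi> (snd c) (fst c) \<noteq> fst c}"
        by (intro open_Collect_neq continuous_intros)
    qed (use False in auto)
  qed
next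
  case False
  obtain \<rho> \<epsilon> where r: "\<rho> > 0" "\<epsilon> > 0" and H: "\<forall>z u. dist z x < \<rho> \<and> 0 < u \<and> u < \<epsilon> \<longrightarrow> \<phi> u z \<noteq> z"
    using SP[OF x] by blast
  have B: "False" if "(y,q) \<in> ball (x,p) (min \<rho> \<epsilon>)" "q > 0" "\<phi> q y = y" for y q
  proof -
    have "dist y x < \<rho>" using that dist_fst_le[of "(x,p)" "(y,q)"] by (simp add: dist_commute)
    moreover have "\<bar>q - p\<bar> < \<epsilon>" using that dist_snd_le[of "(x,p)" "(y,q)"] by (simp add: dist_real_def abs_minus_commute)
    ultimately show ?thesis using H that False by force
  qed
  show ?thesis using r B by (intro exI[of _ "ball (x,p) (min \<rho> \<epsilon>)"]) auto
qed

lemma FIN: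
  assumes SE: "singular_expansive \<phi>" and K: "compact K" "K \<inter> Sing \<phi> = {}"
  shows "finite {orbit \<phi> y | y q. y \<in> K \<and> 0 < q \<and> q \<le> B \<and> \<phi> q y = y}"
proof -
  let ?P = "\<lambda>N. open N \<and> (\<forall>y q y' q'. (y,q) \<in> N \<and> q > 0 \<and> \<phi> q y = y \<and>
            (y',q') \<in> N \<and> q' > 0 \<and> \<phi> q' y' = y' \<longrightarrow> orbit \<phi> y = orbit \<phi> y')"
  have "\<forall>c\<in>K \<times> {0..B}. \<exists>N. c \<in> N \<and> ?P N"
  proof
    fix c assume "c \<in> K \<times> {0..B}"
    then have "fst c \<notin> Sing \<phi>" using K by auto
    then show "\<exists>N. c \<in> N \<and> ?P N" using LOC[OF SE, of "fst c" "snd c"] by auto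
  qed
  from bchoice[OF this] obtain N where N: "\<forall>c\<in>K \<times> {0..B}. c \<in> N c \<and> ?P (N c)" by blast
  have cK: "compact (K \<times> {0..B})" using K by (intro compact_Times) auto
  obtain C where C: "C \<subseteq> K \<times> {0..B}" "finite C" "K \<times> {0..B} \<subseteq> (\<Union>c\<in>C. N c)"
    using compactE_image[OF cK, of "K \<times> {0..B}" N] N by blast
  define A where "A c = {orbit \<phi> y | y q. (y,q) \<in> N c \<and> 0 < q \<and> \<phi> q y = y}" for c
  have finA: "finite (A c)" if "c \<in> C" for c
  proof (cases "A c = {}")
    case False
    then obtain a where a: "a \<in> A c" by auto
    have "A c \<subseteq> {a}"
    proof
      fix b assume "b \<in> A c"
      then show "b \<in> {a}" using a N C that unfolding A_def by blast
    qed
    then show ?thesis using finite_subset by blast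
  qed simp
  have "{orbit \<phi> y | y q. y \<in> K \<and> 0 < q \<and> q \<le> B \<and> \<phi> q y = y} \<subseteq> (\<Union>c\<in>C. A c)"
  proof
    fix ob assume "ob \<in> {orbit \<phi> y | y q. y \<in> K \<and> 0 < q \<and> q \<le> B \<and> \<phi> q y = y}"
    then obtain y q where yq: "ob = orbit \<phi> y" "y \<in> K" "0 < q" "q \<le> B" "\<phi> q y = y" by blast
    then have "(y,q) \<in> K \<times> {0..B}" by auto
    then obtain c where "c \<in> C" "(y,q) \<in> N c" using C by blast
    then show "ob \<in> (\<Union>c\<in>C. A c)" unfolding A_def using yq by blast
  qed
  moreover have "finite (\<Union>c\<in>C. A c)" using C finA by auto
  ultimately show ?thesis using finite_subset by blast
qed

lemma per_shift: assumes "\<phi> q x = x" shows "\<phi> q (\<phi> a x) = \<phi> a x"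
proof -
  have "\<phi> q (\<phi> a x) = \<phi> a (\<phi> q x)" by (simp add: add.commute)
  then show ?thesis using assms by simp
qed

lemma part1:
  assumes SE: "singular_expansive \<phi>"
  shows "countable (periodic_orbits \<phi>)"
proof -
  define Km where "Km m = {z. 1/(real m+1) \<le> sdist z (Sing \<phi>)}" for m :: nat
  have contsd: "continuous_on UNIV (\<lambda>z. sdist z (Sing \<phi>))"
  proof (cases "Sing \<phi> = {}")
    case True then show ?thesis unfolding sdist_def by (simp add: continuous_on_const)
  next
    case False then show ?thesis unfolding sdist_def by (simp add: continuous_on_infdist continuous_on_id)
  qed
  have cm: "compact (Km m)" for m
  proof -
    have "closed (Km m)" unfolding Km_def by (intro closed_Collect_le continuous_on_const contsd)
    then have "compact (UNIV \<inter> Km m)" using cpt by (intro compact_Int_closed)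
    then show ?thesis by simp
  qed
  have dj: "Km m \<inter> Sing \<phi> = {}" for m
  proof -
    have "z \<notin> Km m" if "z \<in> Sing \<phi>" for z
    proof -
      have "sdist z (Sing \<phi>) = 0" using that unfolding sdist_def by auto
      moreover have "0 < 1/(real m + 1)" by simp
      ultimately show ?thesis unfolding Km_def by auto
    qed
    then show ?thesis by auto
  qed
  define S where "S m = {orbit \<phi> y | y q. y \<in> Km m \<and> 0 < q \<and> q \<le> real m \<and> \<phi> q y = y}" for m
  have "finite (S m)" for m unfolding S_def by (rule FIN[OF SE cm dj])
  have sub: "periodic_orbits \<phi> \<subseteq> (\<Union>m. S m)"
  proof
    fix ob assume "ob \<in> periodic_orbits \<phi>"
    then obtain x where x: "ob = orbit \<phi> x" "periodic_pt \<phi> x" unfolding periodic_orbits_def by blast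
    then obtain q where q: "x \<notin> Sing \<phi>" "q > 0" "\<phi> q x = x" unfolding periodic_pt_def by blast
    obtain r where r: "r > 0" "\<forall>z\<in>{x}. r \<le> sdist z (Sing \<phi>)" using sdist_pos[of "{x}"] q by auto
    obtain m0 where m0: "0 < m0" "inverse (real m0) < r" using ex_inverse_of_nat_less r by blast
    define m1 where "m1 = m0 - 1"
    have "real m0 = real m1 + 1" using m0 unfolding m1_def by simp
    then have m1: "inverse (real m1 + 1) < r" using m0 by simp
    obtain m2 where m2: "q \<le> real m2" using real_arch_simple by blast
    define m where "m = max m1 m2"
    have "1/(real m+1) \<le> 1/(real m1 + 1)" unfolding m_def by (intro divide_left_mono) auto
    also have "\<dots> < r" using m1 by (simp add: inverse_eq_divide)
    finally have "x \<in> Km m" unfolding Km_def using r by auto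
    moreover have "q \<le> real m" using m2 unfolding m_def by linarith
    ultimately have "ob \<in> S m" unfolding S_def using x q by blast
    then show "ob \<in> (\<Union>m. S m)" by blast
  qed
  have "countable (\<Union>m. S m)" using \<open>\<And>m. finite (S m)\<close> by (rule_tac countable_UN) (auto intro: countable_finite)
  then show ?thesis using sub countable_subset by blast
qed

lemma part3:
  assumes SE: "singular_expansive \<phi>" and DI: "dyn_isolated \<phi> (Sing \<phi>)" and t: "t > 0"
  shows "finite {orbit \<phi> x | x. periodic_pt \<phi> x \<and> period \<phi> x \<le> t}"
proof -
  obtain U V where UV: "open V" "Sing \<phi> \<subseteq> V" "V \<subseteq> U" "Sing \<phi> = (\<Inter>t. \<phi> t ` U)"
    using DI unfolding dyn_isolated_def by blast
  define K where "K = - V"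
  have cK: "compact K" unfolding K_def using cpt UV(1)
    by (metis Compl_eq_Diff_UNIV compact_diff)
  have dK: "K \<inter> Sing \<phi> = {}" unfolding K_def using UV by auto
  have "{orbit \<phi> x | x. periodic_pt \<phi> x \<and> period \<phi> x \<le> t} \<subseteq>
        {orbit \<phi> y | y q. y \<in> K \<and> 0 < q \<and> q \<le> t + 1 \<and> \<phi> q y = y}"
  proof
    fix ob assume "ob \<in> {orbit \<phi> x | x. periodic_pt \<phi> x \<and> period \<phi> x \<le> t}"
    then obtain x where x: "ob = orbit \<phi> x" "x \<notin> Sing \<phi>" "\<exists>u>0. \<phi> u x = x" "period \<phi> x \<le> t"
      unfolding periodic_pt_def by blast
    have ne: "{u. u > 0 \<and> \<phi> u x = x} \<noteq> {}" using x by auto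
    have "Inf {u. u > 0 \<and> \<phi> u x = x} < t + 1" using x(4) unfolding period_def by simp
    then obtain q where q: "q > 0" "\<phi> q x = x" "q < t + 1" using cInf_lessD[OF ne] by auto
    have "\<exists>a. \<phi> a x \<in> K"
    proof (rule ccontr)
      assume "\<not> (\<exists>a. \<phi> a x \<in> K)"
      then have inV: "\<phi> a x \<in> V" for a unfolding K_def by auto
      have "x \<in> \<phi> \<tau> ` U" for \<tau>
      proof -
        have "x = \<phi> \<tau> (\<phi> (-\<tau>) x)" by (simp only: phi_inv)
        moreover have "\<phi> (-\<tau>) x \<in> U" using inV UV by auto
        ultimately show ?thesis by blast
      qed
      then have "x \<in> Sing \<phi>" using UV(4) by blast
      then show False using x by simp
    qed
    then obtain a where a: "\<phi> a x \<in> K" by blast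
    have "\<phi> q (\<phi> a x) = \<phi> a x" by (rule per_shift[OF q(2)])
    moreover have "ob = orbit \<phi> (\<phi> a x)" using x by simp
    moreover have "q \<le> t + 1" using q by simp
    ultimately show "ob \<in> {orbit \<phi> y | y q. y \<in> K \<and> 0 < q \<and> q \<le> t + 1 \<and> \<phi> q y = y}"
      using a q(1) by (intro CollectI exI[of _ "\<phi> a x"] exI[of _ q]) simp
  qed
  moreover have "finite {orbit \<phi> y | y q. y \<in> K \<and> 0 < q \<and> q \<le> t + 1 \<and> \<phi> q y = y}"
    by (rule FIN[OF SE cK dK])
  ultimately show ?thesis using finite_subset by blast
qed

lemma alpha:
  assumes K: "compact K" and mp: "\<forall>w\<in>K. \<forall>u. 0 < u \<and> u < p0 \<longrightarrow> \<phi> u w \<noteq> w"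
    and tau: "0 < \<tau>" "\<tau> < p0" and inv: "\<forall>w\<in>K. \<phi> (-\<tau>) w \<in> K"
  shows "\<exists>\<alpha>>0. \<forall>w\<in>K. \<alpha> \<le> dist w (\<phi> \<tau> w) \<and> \<alpha> \<le> dist w (\<phi> (-\<tau>) w)"
proof (cases "K = {}")
  case True then show ?thesis by (intro exI[of _ 1]) auto
next
  case False
  have "continuous_on K (\<lambda>w. dist w (\<phi> \<tau> w))"
    by (intro continuous_on_dist continuous_on_id cont_comp continuous_on_const)
  then obtain w0 where w0: "w0 \<in> K" "\<forall>w\<in>K. dist w0 (\<phi> \<tau> w0) \<le> dist w (\<phi> \<tau> w)"
    using continuous_attains_inf[OF K False] by blast
  have pos: "dist w0 (\<phi> \<tau> w0) > 0" using mp w0 tau by (simp add: eq_commute)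
  have "dist w0 (\<phi> \<tau> w0) \<le> dist w (\<phi> (-\<tau>) w)" if "w \<in> K" for w
  proof -
    have "dist w0 (\<phi> \<tau> w0) \<le> dist (\<phi> (-\<tau>) w) (\<phi> \<tau> (\<phi> (-\<tau>) w))" using w0 inv that by blast
    also have "\<dots> = dist w (\<phi> (-\<tau>) w)" by (simp only: phi_inv dist_commute)
    finally show ?thesis .
  qed
  then show ?thesis using pos w0 by (intro exI[of _ "dist w0 (\<phi> \<tau> w0)"]) auto
qed

lemma part2:
  assumes SE: "singular_expansive \<phi>"
    and H: "Sing \<phi> = {} \<or> (finite (Sing \<phi>) \<and> (\<forall>\<sigma>\<in>Sing \<phi>. \<sigma> isolated_in (UNIV :: 'a set)))"
  shows "expansive \<phi>"
proof -
  have "\<exists>r2>0. \<forall>\<sigma>\<in>Sing \<phi>. \<forall>z. dist \<sigma> z < r2 \<longrightarrow> z = \<sigma>"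
  proof (cases "Sing \<phi> = {}")
    case True then show ?thesis by (intro exI[of _ 1]) auto
  next
    case False
    then have fin: "finite (Sing \<phi>)" using H by auto
    have iso: "\<forall>\<sigma>\<in>Sing \<phi>. \<exists>e>0. \<forall>y. dist \<sigma> y < e \<longrightarrow> y = \<sigma>"
    proof
      fix \<sigma> assume "\<sigma> \<in> Sing \<phi>"
      then have "\<sigma> isolated_in (UNIV::'a set)" using H False by auto
      then show "\<exists>e>0. \<forall>y. dist \<sigma> y < e \<longrightarrow> y = \<sigma>" unfolding isolated_in_dist_Ex_iff by auto
    qed
    from bchoice[OF iso] obtain e where e: "\<forall>\<sigma>\<in>Sing \<phi>. e \<sigma> > 0 \<and> (\<forall>y. dist \<sigma> y < e \<sigma> \<longrightarrow> y = \<sigma>)" by blast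
    have "Min (e ` Sing \<phi>) > 0" using fin False e by (subst Min_gr_iff) auto
    moreover have "Min (e ` Sing \<phi>) \<le> e \<sigma>" if "\<sigma> \<in> Sing \<phi>" for \<sigma> using fin that by auto
    ultimately show ?thesis using e by (intro exI[of _ "Min (e ` Sing \<phi>)"]) force
  qed
  then obtain r2 where r2: "r2 > 0" "\<forall>\<sigma>\<in>Sing \<phi>. \<forall>z. dist \<sigma> z < r2 \<longrightarrow> z = \<sigma>" by blast
  have "open (Sing \<phi>)" unfolding open_contains_ball
  proof
    fix \<sigma> assume "\<sigma> \<in> Sing \<phi>"
    have "ball \<sigma> r2 \<subseteq> Sing \<phi>"
    proof
      fix z assume "z \<in> ball \<sigma> r2"
      then have "dist \<sigma> z < r2" by simp
      then have "z = \<sigma>" using r2 \<open>\<sigma> \<in> Sing \<phi>\<close> by blast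
      then show "z \<in> Sing \<phi>" using \<open>\<sigma> \<in> Sing \<phi>\<close> by simp
    qed
    then show "\<exists>e>0. ball \<sigma> e \<subseteq> Sing \<phi>" using r2 by blast
  qed
  define K where "K = - Sing \<phi>"
  have cK: "compact K" unfolding K_def using cpt \<open>open (Sing \<phi>)\<close>
    by (metis Compl_eq_Diff_UNIV compact_diff)
  have dK: "K \<inter> Sing \<phi> = {}" unfolding K_def by auto
  have invK: "\<phi> a w \<in> K \<longleftrightarrow> w \<in> K" for a w unfolding K_def by simp
  obtain r1 where r1: "r1 > 0" "\<forall>z\<in>K. r1 \<le> sdist z (Sing \<phi>)" using sdist_pos[OF cK dK] by blast
  define r where "r = min r1 r2"
  have r: "r > 0" "r \<le> r1" "r \<le> r2" unfolding r_def using r1 r2 by auto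
  obtain p0 where p0: "p0 > 0" "\<forall>w\<in>K. \<forall>u. 0 < u \<and> u < p0 \<longrightarrow> \<phi> u w \<noteq> w" using minper[OF cK dK] by blast
  show ?thesis unfolding expansive_def expansive_on_def
  proof (intro allI impI)
    fix \<epsilon> :: real assume "\<epsilon> > 0"
    define \<tau>0 where "\<tau>0 = min (min \<epsilon> (p0/2)) 1"
    have t0: "\<tau>0 > 0" "\<tau>0 \<le> \<epsilon>" "\<tau>0 < p0" "\<tau>0 \<le> 1" unfolding \<tau>0_def using \<open>\<epsilon> > 0\<close> p0 by auto
    obtain ds where ds: "ds > 0" and DS: "\<And>x y s. increasing_homeo s \<and>
       (\<forall>t. dist (\<phi> t x) (\<phi> (s t) y) \<le> ds * sdist (\<phi> t x) (Sing \<phi>)) \<Longrightarrow>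
       (\<exists>t0. \<phi> (s t0) y \<in> flow_seg \<phi> {t0 - \<tau>0/4 .. t0 + \<tau>0/4} x)"
    proof -
      have "\<tau>0/4 > 0" using t0 by simp
      from SE[unfolded singular_expansive_def, rule_format, OF this] show ?thesis using that by blast
    qed
    define E where "E = ds * r"
    have E: "E > 0" unfolding E_def using ds r by simp
    obtain \<kappa> where \<kappa>: "\<kappa> > 0" and KA: "\<And>a b x y. \<bar>a\<bar> \<le> 1 \<Longrightarrow> \<bar>b\<bar> \<le> 1 \<Longrightarrow> \<bar>a-b\<bar> < \<kappa> \<Longrightarrow> dist x y < \<kappa> \<Longrightarrow> dist (\<phi> a x) (\<phi> b y) < E/2"
      using UC[of "E/2" 1] E by auto
    define \<tau>2 where "\<tau>2 = min (\<tau>0/4) (\<kappa>/3)"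
    have t2: "\<tau>2 > 0" "\<tau>2 \<le> \<tau>0/4" "2*\<tau>2 < \<kappa>" "\<tau>2 \<le> 1/4" "\<tau>2 < p0" unfolding \<tau>2_def using t0 \<kappa> by auto
    have invm: "\<forall>w\<in>K. \<phi> (-\<tau>) w \<in> K" for \<tau> using invK by blast
    obtain \<alpha>0 where a0: "\<alpha>0 > 0" "\<forall>w\<in>K. \<alpha>0 \<le> dist w (\<phi> \<tau>0 w) \<and> \<alpha>0 \<le> dist w (\<phi> (-\<tau>0) w)"
      using alpha[OF cK p0(2) t0(1) t0(3) invm] by blast
    obtain \<alpha>2 where a2: "\<alpha>2 > 0" "\<forall>w\<in>K. \<alpha>2 \<le> dist w (\<phi> \<tau>2 w) \<and> \<alpha>2 \<le> dist w (\<phi> (-\<tau>2) w)"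
      using alpha[OF cK p0(2) t2(1) t2(5) invm] by blast
    obtain \<rho> where \<rho>: "\<rho> > 0" and KB: "\<And>a b x y. \<bar>a\<bar> \<le> 2 \<Longrightarrow> \<bar>b\<bar> \<le> 2 \<Longrightarrow> \<bar>a-b\<bar> < \<rho> \<Longrightarrow> dist x y < \<rho> \<Longrightarrow> dist (\<phi> a x) (\<phi> b y) < \<alpha>2/2"
      using UC[of "\<alpha>2/2" 2] a2 by auto
    define \<delta> where "\<delta> = min (min (\<rho>/2) (\<alpha>0/2)) (min (\<alpha>2/2) (min (E/2) (r/2)))"
    have \<delta>: "\<delta> > 0" "\<delta> < \<rho>" "\<delta> < \<alpha>0" "\<delta> \<le> \<alpha>2/2" "\<delta> \<le> E/2" "\<delta> < r"
      unfolding \<delta>_def using \<rho> a0 a2 E r by auto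
    show "\<exists>\<delta>>0. \<forall>x\<in>UNIV. \<forall>y\<in>UNIV. \<forall>s. continuous_on UNIV s \<and> s 0 = 0 \<and> (\<forall>t. dist (\<phi> t x) (\<phi> (s t) y) \<le> \<delta>)
        \<longrightarrow> y \<in> flow_seg \<phi> {- \<epsilon>..\<epsilon>} x"
    proof (intro exI[of _ \<delta>] conjI ballI allI impI \<delta>(1))
      fix x y and s :: "real \<Rightarrow> real"
      assume A: "continuous_on UNIV s \<and> s 0 = 0 \<and> (\<forall>t. dist (\<phi> t x) (\<phi> (s t) y) \<le> \<delta>)"
      have sc: "continuous_on UNIV s" and s0: "s 0 = 0" and cl: "\<And>t. dist (\<phi> t x) (\<phi> (s t) y) \<le> \<delta>"
        using A by auto
      have dxy: "dist x y \<le> \<delta>" using cl[of 0] s0 by simp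
      have seg0: "x \<in> flow_seg \<phi> {- \<epsilon>..\<epsilon>} x" unfolding flow_seg_def using \<open>\<epsilon> > 0\<close>
        by (intro image_eqI[of _ _ 0]) auto
      show "y \<in> flow_seg \<phi> {- \<epsilon>..\<epsilon>} x"
      proof (cases "x \<in> Sing \<phi> \<or> y \<in> Sing \<phi>")
        case True
        have dxy2: "dist x y < r2" "dist y x < r2" using dxy \<delta> r by (simp_all add: dist_commute)
        have "y = x"
        proof (cases "x \<in> Sing \<phi>")
          case True then show ?thesis using r2(2) dxy2 by blast
        next
          case False then have "y \<in> Sing \<phi>" using \<open>x \<in> Sing \<phi> \<or> y \<in> Sing \<phi>\<close> by simp
          then show ?thesis using r2(2) dxy2 by metis
        qed
        then show ?thesis using seg0 by simp
      next
        case False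
        then have xK: "x \<in> K" and yK: "y \<in> K" unfolding K_def by auto
        have E1: "\<bar>s (t + h) - s t - h\<bar> < \<tau>2" if "\<bar>h\<bar> \<le> 1" for t h
        proof -
          define cl1 where "cl1 = (\<lambda>h::real. max (-1) (min 1 h))"
          define g where "g = (\<lambda>h. s (t + cl1 h) - s t - cl1 h)"
          have gc: "continuous_on UNIV g" unfolding g_def cl1_def
            by (intro continuous_intros continuous_on_compose2[OF sc]) auto
          have ng: "\<bar>g h'\<bar> \<noteq> \<tau>2" for h'
          proof
            assume eq: "\<bar>g h'\<bar> = \<tau>2"
            define h1 where "h1 = cl1 h'"
            define e where "e = s (t + h1) - s t - h1"
            have h1: "\<bar>h1\<bar> \<le> 1" unfolding h1_def cl1_def by auto
            have ee: "\<bar>e\<bar> = \<tau>2" using eq unfolding e_def g_def h1_def by simp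
            define a where "a = h1 + e"
            have aa: "\<bar>a\<bar> \<le> 2" unfolding a_def using h1 ee t2 by linarith
            have dr: "dist (\<phi> t x) (\<phi> (s t) y) < \<rho>" using cl[of t] \<delta>(2) by linarith
            have "dist (\<phi> a (\<phi> t x)) (\<phi> a (\<phi> (s t) y)) < \<alpha>2/2"
              by (rule KB[OF aa aa _ dr]) (use \<rho> in simp)
            moreover have "\<phi> a (\<phi> (s t) y) = \<phi> (s (t + h1)) y" unfolding a_def e_def by simp
            moreover have "\<phi> a (\<phi> t x) = \<phi> e (\<phi> (t + h1) x)" unfolding a_def by (simp add: algebra_simps)
            ultimately have d1: "dist (\<phi> e (\<phi> (t + h1) x)) (\<phi> (s (t + h1)) y) < \<alpha>2/2" by simp
            have d2: "dist (\<phi> (t + h1) x) (\<phi> (s (t + h1)) y) \<le> \<delta>" by (rule cl)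
            define w where "w = \<phi> (t + h1) x"
            have wK: "w \<in> K" unfolding w_def using xK invK by simp
            have tr: "dist w (\<phi> e w) \<le> dist w (\<phi> (s (t + h1)) y) + dist (\<phi> e w) (\<phi> (s (t + h1)) y)"
              using dist_triangle[of w "\<phi> e w" "\<phi> (s (t + h1)) y"] by (simp add: dist_commute)
            have "dist w (\<phi> e w) < \<alpha>2" using tr d1 d2 \<delta>(4) unfolding w_def by linarith
            moreover have "\<alpha>2 \<le> dist w (\<phi> e w)"
            proof (cases "e \<ge> 0")
              case True then have "e = \<tau>2" using ee by simp
              then show ?thesis using a2 wK by simp
            next
              case False then have "e = -\<tau>2" using ee by simp
              then show ?thesis using a2 wK by simp
            qed
            ultimately show False by simp
          qed
          have "\<bar>g h\<bar> < \<tau>2"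
            by (rule nocross[OF gc connected_UNIV UNIV_I _ _ UNIV_I, of 0]) (use ng t2 s0 in \<open>auto simp: g_def cl1_def\<close>)
          moreover have "cl1 h = h" unfolding cl1_def using that by auto
          ultimately show ?thesis unfolding g_def by simp
        qed
        interpret P: plset s \<tau>2 by unfold_locales (use E1 t2 in auto)
        have E3: "dist (\<phi> t x) (\<phi> (pl s t) y) \<le> ds * sdist (\<phi> t x) (Sing \<phi>)" for t
        proof -
          define c where "c = pl s t - s t"
          have c: "\<bar>c\<bar> < 2 * \<tau>2" unfolding c_def by (rule P.pl_close)
          have "dist (\<phi> c (\<phi> (s t) y)) (\<phi> 0 (\<phi> (s t) y)) < E/2"
            by (rule KA) (use c t2 \<kappa> in auto)
          moreover have "\<phi> c (\<phi> (s t) y) = \<phi> (pl s t) y" unfolding c_def by simp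
          ultimately have "dist (\<phi> (s t) y) (\<phi> (pl s t) y) < E/2" by (simp add: dist_commute)
          moreover have "dist (\<phi> t x) (\<phi> (pl s t) y) \<le> dist (\<phi> t x) (\<phi> (s t) y) + dist (\<phi> (s t) y) (\<phi> (pl s t) y)"
            by (rule dist_triangle)
          ultimately have "dist (\<phi> t x) (\<phi> (pl s t) y) < E" using cl[of t] \<delta>(5) by linarith
          also have "E \<le> ds * sdist (\<phi> t x) (Sing \<phi>)"
          proof -
            have "\<phi> t x \<in> K" using xK invK by simp
            then have "r \<le> sdist (\<phi> t x) (Sing \<phi>)" using r1 r by force
            then show ?thesis unfolding E_def using ds by (intro mult_left_mono) auto
          qed
          finally show ?thesis by simp
        qed
        obtain t0 where "\<phi> (pl s t0) y \<in> flow_seg \<phi> {t0 - \<tau>0/4 .. t0 + \<tau>0/4} x"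
          using DS[of "pl s" x y] P.pl_homeo E3 by blast
        then obtain u where u0: "\<phi> (pl s t0) y = \<phi> u x" "u \<in> {t0 - \<tau>0/4 .. t0 + \<tau>0/4}"
          unfolding flow_seg_def by auto
        have u: "\<phi> (pl s t0) y = \<phi> u x" "\<bar>u - t0\<bar> \<le> \<tau>0/4" using u0(1) apply simp
          using u0(2) unfolding atLeastAtMost_iff abs_le_iff by linarith
        define v where "v = u - pl s t0"
        have yv: "y = \<phi> v x"
        proof -
          have "y = \<phi> (-(pl s t0)) (\<phi> (pl s t0) y)" by (simp only: phi_inv)
          also have "\<dots> = \<phi> v x" unfolding u v_def by simp
          finally show ?thesis .
        qed
        define G where "G = (\<lambda>t. s t - t + v)"
        have Gc: "continuous_on UNIV G" unfolding G_def by (intro continuous_intros sc)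
        have nG: "\<bar>G t\<bar> \<noteq> \<tau>0" for t
        proof
          assume eq: "\<bar>G t\<bar> = \<tau>0"
          define w where "w = \<phi> t x"
          have wK: "w \<in> K" unfolding w_def using xK invK by simp
          have "\<phi> (G t) w = \<phi> (s t) y" unfolding w_def G_def yv by simp
          then have "dist w (\<phi> (G t) w) < \<alpha>0" using cl[of t] \<delta> unfolding w_def by simp
          moreover have "\<alpha>0 \<le> dist w (\<phi> (G t) w)"
          proof (cases "G t \<ge> 0")
            case True then have "G t = \<tau>0" using eq by simp
            then show ?thesis using a0 wK by simp
          next
            case False then have "G t = -\<tau>0" using eq by simp
            then show ?thesis using a0 wK by simp
          qed
          ultimately show False by simp
        qed
        have "\<bar>G t0\<bar> < \<tau>0"
        proof -
          have "G t0 = (s t0 - pl s t0) + (u - t0)" unfolding G_def v_def by simp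
          moreover have "\<bar>pl s t0 - s t0\<bar> < 2 * \<tau>2" by (rule P.pl_close)
          ultimately show ?thesis using u t2 t0 by linarith
        qed
        then have "\<bar>G 0\<bar> < \<tau>0" by (rule nocross[OF Gc connected_UNIV UNIV_I _ _ UNIV_I]) (use nG in auto)
        then have "\<bar>v\<bar> < \<tau>0" unfolding G_def using s0 by simp
        then show ?thesis unfolding yv flow_seg_def using t0 by (intro image_eqI[of _ _ v]) auto
      qed
    qed
  qed
qed

end

theorem mainTheorem9:
  fixes \<phi> :: "real \<Rightarrow> 'a::metric_space \<Rightarrow> 'a"
  assumes "compact (UNIV :: 'a set)"
    and "is_flow \<phi>"
    and "singular_expansive \<phi>"
  shows "countable (periodic_orbits \<phi>)
    \<and> ((Sing \<phi> = {} \<or> (finite (Sing \<phi>) \<and> (\<forall>\<sigma>\<in>Sing \<phi>. \<sigma> isolated_in (UNIV :: 'a set))))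
           \<longrightarrow> expansive \<phi>)
    \<and> (dyn_isolated \<phi> (Sing \<phi>) \<longrightarrow> (\<forall>t>0.
           finite {orbit \<phi> x | x. periodic_pt \<phi> x \<and> period \<phi> x \<le> t}))"
proof -
  interpret cflow \<phi> using assms(1,2) by unfold_locales
  show ?thesis using part1[OF assms(3)] part2[OF assms(3)] part3[OF assms(3)] by blast
qed

end
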